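(* In the setting described in the context, suppose the weighted design matrix $A_w\in\mathbb{R}^{T\times k}$ has full column rank. Then the least-squares estimator $\hat{\mathbf f}=(A_w^{\top}A_w)^{-1}A_w^{\top}\tilde{\mathbf s}$ satisfies $\mathbb{E}[\hat{\mathbf f}]=\mathbf f$, where the expectation is over the randomness of the users' reports, taken conditionally on the block counts $(n_0,\dots,n_{\ell-1})$ (all assumed $\ge 1$).
   Context: Domain $[k]=\{0,\dots,k-1\}$, privacy parameter $\varepsilon>0$, pairwise-coprime integer moduli $m_0,\dots,m_{\ell-1}\ge 2$. For each $j$, $\omega_j$ is the nearest integer to $m_j/(e^{\varepsilon}+1)$, $p_j=\frac{\omega_j e^{\varepsilon}}{\omega_j e^{\varepsilon}+m_j-\omega_j}$, and $q_j=\frac{\omega_j e^{\varepsilon}(\omega_j-1)+(m_j-\omega_j)\omega_j}{(m_j-1)(\omega_j e^{\varepsilon}+m_j-\omega_j)}$. There are $n$ users with values $x_1,\dots,x_n\in[k]$, and $\mathbf f\in\mathbb{R}^k$ with $f_v=\#\{i:x_i=v\}/n$. Each user independently runs the following mechanism on its value $x$: draw $J$ uniform on $\{0,\dots,\ell-1\}$; set $r=x\bmod m_J$; with probability $p_J$ report $Z=\{r\}\cup S$ with $S$ a uniformly random $(\omega_J-1)$-subset of $\{0,\dots,m_J-1\}\setminus\{r\}$, otherwise report $Z$ a uniformly random $\omega_J$-subset of $\{0,\dots,m_J-1\}\setminus\{r\}$; the report is $(J,Z)$. Server: $n_j$ is the number of reports with $J=j$; $c_j\in\mathbb{R}^{m_j}$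 with $c_j[a]$ the number of reports with $J=j$ and $a\in Z$; $\bar y_j=c_j/n_j$; $\hat s_j=(\bar y_j-q_j\mathbf 1)/(p_j-q_j)$; $\mathbf s\in\mathbb{R}^T$ stacks $\hat s_0,\dots,\hat s_{\ell-1}$, with $T=\sum_j m_j$. Let $\pi_j=q_j+(p_j-q_j)/m_j$ and $w_j=\frac{(p_j-q_j)^2 n_j}{\pi_j(1-\pi_j)}$; let $W^{1/2}$ be the $T\times T$ diagonal matrix whose entries are $\sqrt{w_0}$ repeated $m_0$ times, ..., $\sqrt{w_{\ell-1}}$ repeated $m_{\ell-1}$ times. For each $j$, $A_j\in\{0,1\}^{m_j\times k}$ has $A_j[r,x]=1$ iff $x\bmod m_j=r$; $A\in\{0,1\}^{T\times k}$ stacks $A_0,\dots,A_{\ell-1}$ vertically; $A_w=W^{1/2}A$ and $\tilde{\mathbf s}=W^{1/2}\mathbf s$. *)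

theory Defs
  imports "HOL-Probability.Probability" "Jordan_Normal_Form.Matrix"
    "Jordan_Normal_Form.Gauss_Jordan_Elimination" "Jordan_Normal_Form.DL_Rank"
begin

text \<open>Parameters: eps (privacy), moduli m 0, ..., m (l-1), number of blocks l.
  A report is a pair (J, Z) with J a block index and Z a set of residues.\<close>

type_synonym report = "nat \<times> nat set"

definition omega :: "real \<Rightarrow> (nat \<Rightarrow> nat) \<Rightarrow> nat \<Rightarrow> nat" where
  "omega eps m j = nat (round (real (m j) / (exp eps + 1)))"

definition pp :: "real \<Rightarrow> (nat \<Rightarrow> nat) \<Rightarrow> nat \<Rightarrow> real" where
  "pp eps m j = (let w = real (omega eps m j); mj = real (m j) in
     w * exp eps / (w * exp eps + mj - w))"

definition qq :: "real \<Rightarrow> (nat \<Rightarrow> nat) \<Rightarrow> nat \<Rightarrow> real" where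
  "qq eps m j = (let w = real (omega eps m j); mj = real (m j) in
     (w * exp eps * (w - 1) + (mj - w) * w) / ((mj - 1) * (w * exp eps + mj - w)))"

definition mech :: "real \<Rightarrow> (nat \<Rightarrow> nat) \<Rightarrow> nat \<Rightarrow> nat \<Rightarrow> report pmf" where
  "mech eps m l x = do {
     J \<leftarrow> pmf_of_set {0..<l};
     let r = x mod m J;
     b \<leftarrow> bernoulli_pmf (pp eps m J);
     if b then do {
       S \<leftarrow> pmf_of_set {S. S \<subseteq> {0..<m J} - {r} \<and> card S = omega eps m J - 1};
       return_pmf (J, insert r S) }
     else do {
       Z \<leftarrow> pmf_of_set {Z. Z \<subseteq> {0..<m J} - {r} \<and> card Z = omega eps m J};
       return_pmf (J, Z) } }"

definition reports :: "real \<Rightarrow> (nat \<Rightarrow> nat) \<Rightarrow> nat \<Rightarrow> nat \<Rightarrow> (nat \<Rightarrow> nat) \<Rightarrow> (nat \<Rightarrow> report) pmf" where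
  "reports eps m l n x = Pi_pmf {0..<n} (0, {}) (\<lambda>i. mech eps m l (x i))"

definition blockcount :: "nat \<Rightarrow> (nat \<Rightarrow> report) \<Rightarrow> nat \<Rightarrow> nat" where
  "blockcount n \<rho> j = card {i. i < n \<and> fst (\<rho> i) = j}"

definition cnt :: "nat \<Rightarrow> (nat \<Rightarrow> report) \<Rightarrow> nat \<Rightarrow> nat \<Rightarrow> nat" where
  "cnt n \<rho> j a = card {i. i < n \<and> fst (\<rho> i) = j \<and> a \<in> snd (\<rho> i)}"

definition shat :: "real \<Rightarrow> (nat \<Rightarrow> nat) \<Rightarrow> nat \<Rightarrow> (nat \<Rightarrow> report) \<Rightarrow> nat \<Rightarrow> nat \<Rightarrow> real" where
  "shat eps m n \<rho> j a =
     (real (cnt n \<rho> j a) / real (blockcount n \<rho> j) - qq eps m j) / (pp eps m j - qq eps m j)"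

definition piv :: "real \<Rightarrow> (nat \<Rightarrow> nat) \<Rightarrow> nat \<Rightarrow> real" where
  "piv eps m j = qq eps m j + (pp eps m j - qq eps m j) / real (m j)"

definition wt :: "real \<Rightarrow> (nat \<Rightarrow> nat) \<Rightarrow> (nat \<Rightarrow> nat) \<Rightarrow> nat \<Rightarrow> real" where
  "wt eps m nj j = (pp eps m j - qq eps m j)^2 * real (nj j) / (piv eps m j * (1 - piv eps m j))"

text \<open>Stacking: row t of the T x k matrix corresponds to block blk t, residue pos t.\<close>
definition offset :: "(nat \<Rightarrow> nat) \<Rightarrow> nat \<Rightarrow> nat" where
  "offset m j = (\<Sum>i<j. m i)"

definition TT :: "(nat \<Rightarrow> nat) \<Rightarrow> nat \<Rightarrow> nat" where
  "TT m l = offset m l"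

definition blk :: "(nat \<Rightarrow> nat) \<Rightarrow> nat \<Rightarrow> nat" where
  "blk m t = (LEAST j. t < offset m (Suc j))"

definition pos :: "(nat \<Rightarrow> nat) \<Rightarrow> nat \<Rightarrow> nat" where
  "pos m t = t - offset m (blk m t)"

definition Amat :: "(nat \<Rightarrow> nat) \<Rightarrow> nat \<Rightarrow> nat \<Rightarrow> real mat" where
  "Amat m l k = mat (TT m l) k (\<lambda>(t, v). if v mod m (blk m t) = pos m t then 1 else 0)"

definition Aw :: "real \<Rightarrow> (nat \<Rightarrow> nat) \<Rightarrow> nat \<Rightarrow> nat \<Rightarrow> (nat \<Rightarrow> nat) \<Rightarrow> real mat" where
  "Aw eps m l k nj = mat (TT m l) k
     (\<lambda>(t, v). sqrt (wt eps m nj (blk m t)) * Amat m l k $$ (t, v))"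

definition stilde :: "real \<Rightarrow> (nat \<Rightarrow> nat) \<Rightarrow> nat \<Rightarrow> nat \<Rightarrow> (nat \<Rightarrow> report) \<Rightarrow> real vec" where
  "stilde eps m l n \<rho> = vec (TT m l)
     (\<lambda>t. sqrt (wt eps m (blockcount n \<rho>) (blk m t)) * shat eps m n \<rho> (blk m t) (pos m t))"

definition fhat :: "real \<Rightarrow> (nat \<Rightarrow> nat) \<Rightarrow> nat \<Rightarrow> nat \<Rightarrow> nat \<Rightarrow> (nat \<Rightarrow> report) \<Rightarrow> real vec" where
  "fhat eps m l k n \<rho> =
     (let A = Aw eps m l k (blockcount n \<rho>) in
      the (mat_inverse (transpose_mat A * A)) *\<^sub>v (transpose_mat A *\<^sub>v stilde eps m l n \<rho>))"

end

theory Submission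
  imports Defs
begin


lemma (in vec_space) rank_inj:
  assumes A: "A \<in> carrier_mat n k" and r: "rank A = k"
    and v: "v \<in> carrier_vec k" and Av: "A *\<^sub>v v = 0\<^sub>v n"
  shows "v = 0\<^sub>v k"
proof (rule ccontr)
  assume nz: "v \<noteq> 0\<^sub>v k"
  show False
  proof (cases "distinct (cols A)")
    case True
    show False using full_rank_lin_indpt[OF A r True] lin_depI[OF A v nz Av True] by simp
  next
    case False
    obtain S where S: "maximal S (\<lambda>T. T \<subseteq> set (cols A) \<and> lin_indpt T)"
      using maximal_exists[of "(\<lambda>T. T \<subseteq> set (cols A) \<and> lin_indpt T)" "card (set (cols A))" "{}"]
      by (meson List.finite_set card_mono empty_iff empty_subsetI finite_lin_indpt2 rev_finite_subset)
    then have "card S \<le> card (set (cols A))" by (simp add: card_mono maximal_def)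
    also have "card (set (cols A)) < k"
      using A False card_distinct cols_length card_length carrier_matD(2) nat_less_le
      by metis
    finally have "card S < k" .
    then show False using rank_card_indpt[OF A S] r by simp
  qed
qed

lemma gram_inverse:
  fixes A :: "real mat"
  assumes A: "A \<in> carrier_mat T k" and r: "vec_space.rank T A = k"
  shows "\<exists>Bi. mat_inverse (transpose_mat A * A) = Some Bi \<and> Bi * (transpose_mat A * A) = 1\<^sub>m k
     \<and> Bi \<in> carrier_mat k k"
proof -
  let ?B = "transpose_mat A * A"
  have B: "?B \<in> carrier_mat k k" using A by auto
  have inj: "v = 0\<^sub>v k" if v: "v \<in> carrier_vec k" and Bv: "?B *\<^sub>v v = 0\<^sub>v k" for v
  proof -
    have "scalar_prod (transpose_mat A *\<^sub>v (A *\<^sub>v v)) v = 0"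
      using Bv v A assoc_mult_mat_vec[of "transpose_mat A" k T A T v] by simp
    then have "scalar_prod (A *\<^sub>v v) (A *\<^sub>v v) = 0"
      using transpose_vec_mult_scalar[OF A v, of "A *\<^sub>v v"] A v by simp
    then have "(\<Sum>i<T. (A *\<^sub>v v) $ i * (A *\<^sub>v v) $ i) = 0"
      using A by (simp add: scalar_prod_def atLeast0LessThan)
    then have "\<forall>i\<in>{..<T}. (A *\<^sub>v v) $ i * (A *\<^sub>v v) $ i = 0"
      by (subst sum_nonneg_eq_0_iff[symmetric]) auto
    then have "A *\<^sub>v v = 0\<^sub>v T" using A by (intro eq_vecI) auto
    then show ?thesis using vec_space.rank_inj[OF A r v] by simp
  qed
  have d: "det ?B \<noteq> 0"
    using det_0_iff_vec_prod_zero_field[OF B] inj by blast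
  have U: "?B \<in> Units (ring_mat TYPE(real) k b)" for b :: unit by (rule det_non_zero_imp_unit[OF B d])
  obtain Bi where "mat_inverse ?B = Some Bi"
    using mat_inverse(1)[OF B, where b="()"] U by (cases "mat_inverse ?B") auto
  then show ?thesis using mat_inverse(2)[OF B] by blast
qed


definition Zd :: "real \<Rightarrow> (nat \<Rightarrow> nat) \<Rightarrow> nat \<Rightarrow> nat \<Rightarrow> nat set pmf" where
  "Zd eps m J x = bind_pmf (bernoulli_pmf (pp eps m J)) (\<lambda>b. if b then
      map_pmf (insert (x mod m J)) (pmf_of_set {S. S \<subseteq> {0..<m J} - {x mod m J} \<and> card S = omega eps m J - 1})
    else pmf_of_set {Z. Z \<subseteq> {0..<m J} - {x mod m J} \<and> card Z = omega eps m J})"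

lemma mech_alt: "mech eps m l x = bind_pmf (pmf_of_set {0..<l}) (\<lambda>J. map_pmf (Pair J) (Zd eps m J x))"
  unfolding mech_def Zd_def Let_def map_bind_pmf
  by (intro bind_pmf_cong refl) (simp add: map_pmf_def bind_assoc_pmf bind_return_pmf if_distrib)

lemma mech_fst: "map_pmf fst (mech eps m l x) = pmf_of_set {0..<l}"
  unfolding mech_alt map_bind_pmf pmf.map_comp o_def by (simp add: map_pmf_const bind_return_pmf')

lemma measure_bind_pmf':
  "measure_pmf.prob (bind_pmf M N) X = measure_pmf.expectation M (\<lambda>x. measure_pmf.prob (N x) X)"
proof -
  have int: "integrable M (\<lambda>x. measure_pmf.prob (N x) X)"
    by (intro measure_pmf.integrable_const_bound[where B=1]) auto
  have "ennreal (measure_pmf.prob (bind_pmf M N) X) = emeasure (bind_pmf M N) X"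
    by (simp add: measure_pmf.emeasure_eq_measure)
  also have "\<dots> = (\<integral>\<^sup>+x. emeasure (N x) X \<partial>M)"
    by (rule emeasure_bind_pmf)
  also have "\<dots> = (\<integral>\<^sup>+x. ennreal (measure_pmf.prob (N x) X) \<partial>M)"
    by (simp add: measure_pmf.emeasure_eq_measure)
  also have "\<dots> = ennreal (measure_pmf.expectation M (\<lambda>x. measure_pmf.prob (N x) X))"
    by (rule nn_integral_eq_integral[OF int]) auto
  finally show ?thesis
    by (subst (asm) ennreal_inj) (auto intro: Bochner_Integration.integral_nonneg)
qed

lemma omega_less:
  assumes eps: "eps > 0" and m: "m j \<ge> 2"
  shows "omega eps m j < m j"
proof -
  let ?y = "real (m j) / (exp eps + 1)"
  have e: "exp eps > 1" using eps by simp
  have ep: "exp eps + 1 > 0" using e by linarith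
  have y0: "?y \<ge> 0" by (intro divide_nonneg_pos) (use ep in auto)
  have d: "2 < exp eps + 1" using e by linarith
  have ep2: "0 < (exp eps + 1) * 2" using ep by simp
  have "?y < real (m j) / 2" using divide_strict_left_mono[OF d, of "real (m j)"] m ep2 by auto
  then have "?y + 1/2 < real (m j)" using m by linarith
  then have "round ?y < int (m j)" unfolding round_def by linarith
  then show ?thesis unfolding omega_def using m by (cases "round ?y \<ge> 0") (auto simp: nat_less_iff)
qed

lemma card_subsets_mem:
  assumes B: "finite B" and a: "a \<in> B"
  shows "card {S. S \<subseteq> B \<and> card S = k \<and> a \<in> S} * card B = k * card {S. S \<subseteq> B \<and> card S = k}"
proof (cases "k = 0")
  case True
  have "S = {}" if "S \<subseteq> B" "card S = 0" for S
    using that finite_subset[OF that(1) B] by simp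
  then have "{S. S \<subseteq> B \<and> card S = k \<and> a \<in> S} = {}"
    using True by blast
  then have "card {S. S \<subseteq> B \<and> card S = k \<and> a \<in> S} = 0" by (simp only: card.empty)
  then show ?thesis using True by simp
next
  case False
  have eq: "{S. S \<subseteq> B \<and> card S = k \<and> a \<in> S} = insert a ` {S. S \<subseteq> B - {a} \<and> card S = k - 1}"
  proof (intro equalityI subsetI)
    fix S assume S: "S \<in> {S. S \<subseteq> B \<and> card S = k \<and> a \<in> S}"
    then have "S \<subseteq> B" by simp
    then have fS: "finite S" using B by (rule finite_subset)
    have "S = insert a (S - {a})" using S by auto
    moreover have "card (S - {a}) = k - 1" using S fS by (simp add: card_Diff_singleton)
    ultimately show "S \<in> insert a ` {S. S \<subseteq> B - {a} \<and> card S = k - 1}" using S by blast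
  next
    fix S assume "S \<in> insert a ` {S. S \<subseteq> B - {a} \<and> card S = k - 1}"
    then obtain T where T: "T \<subseteq> B - {a}" "card T = k - 1" "S = insert a T" by auto
    have "T \<subseteq> B" using T by auto
    then have "finite T" using B by (rule finite_subset)
    moreover have "a \<notin> T" using T by auto
    ultimately have "card S = k" using T False by simp
    then show "S \<in> {S. S \<subseteq> B \<and> card S = k \<and> a \<in> S}" using T a by auto
  qed
  have inj: "inj_on (insert a) {S. S \<subseteq> B - {a} \<and> card S = k - 1}"
  proof (rule inj_onI)
    fix S T assume S: "S \<in> {S. S \<subseteq> B - {a} \<and> card S = k - 1}" and T: "T \<in> {S. S \<subseteq> B - {a} \<and> card S = k - 1}"
      and e: "insert a S = insert a T"
    have "a \<notin> S" "a \<notin> T" using S T by auto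
    then have "S = insert a S - {a}" "T = insert a T - {a}" by auto
    then show "S = T" using e by simp
  qed
  have "card {S. S \<subseteq> B \<and> card S = k \<and> a \<in> S} = (card B - 1) choose (k - 1)"
    unfolding eq card_image[OF inj] using B a by (simp add: n_subsets card_Diff_singleton)
  moreover have "card {S. S \<subseteq> B \<and> card S = k} = card B choose k"
    using B by (simp add: n_subsets)
  ultimately show ?thesis using times_binomial_minus1_eq[of k "card B"] False by (simp add: mult.commute)
qed

lemma subsets_nonempty:
  assumes "finite B" "k \<le> card B"
  shows "{S. S \<subseteq> B \<and> card S = k} \<noteq> {}" "finite {S. S \<subseteq> B \<and> card S = k}"
proof -
  have "card {S. S \<subseteq> B \<and> card S = k} = card B choose k" using assms by (simp add: n_subsets)
  then have "card {S. S \<subseteq> B \<and> card S = k} > 0" using assms by simp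
  then show "{S. S \<subseteq> B \<and> card S = k} \<noteq> {}" "finite {S. S \<subseteq> B \<and> card S = k}"
    by (auto simp del: card_gt_0_iff dest: card_gt_0_iff[THEN iffD1])
qed

lemma prob_subset_mem:
  assumes B: "finite B" and a: "a \<in> B" and k: "k \<le> card B"
  shows "measure_pmf.prob (pmf_of_set {S. S \<subseteq> B \<and> card S = k}) {S. a \<in> S} = real k / real (card B)"
proof -
  note ne = subsets_nonempty[OF B k]
  have cB: "card B > 0" using B a by (auto simp: card_gt_0_iff)
  have "{S. S \<subseteq> B \<and> card S = k} \<inter> {S. a \<in> S} = {S. S \<subseteq> B \<and> card S = k \<and> a \<in> S}" by auto
  then have "measure_pmf.prob (pmf_of_set {S. S \<subseteq> B \<and> card S = k}) {S. a \<in> S}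
      = real (card {S. S \<subseteq> B \<and> card S = k \<and> a \<in> S}) / real (card {S. S \<subseteq> B \<and> card S = k})"
    using ne by (simp add: measure_pmf_of_set)
  also have "\<dots> = real k / real (card B)"
  proof -
    have "real (card {S. S \<subseteq> B \<and> card S = k \<and> a \<in> S}) * real (card B) = real k * real (card {S. S \<subseteq> B \<and> card S = k})"
      using card_subsets_mem[OF B a, of k] by (simp only: of_nat_mult[symmetric])
    moreover have "card {S. S \<subseteq> B \<and> card S = k} > 0" using ne by (auto simp: card_gt_0_iff)
    ultimately show ?thesis using cB by (auto simp: divide_simps)
  qed
  finally show ?thesis .
qed

lemma pp_bounds:
  assumes "omega eps m j < m j"
  shows "0 \<le> pp eps m j" "pp eps m j \<le> 1"
proof -
  let ?w = "real (omega eps m j)" and ?M = "real (m j)"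
  have wM: "?w < ?M" using assms by simp
  have D: "?w * exp eps + ?M - ?w > 0" using wM by (smt (verit) exp_gt_zero mult_nonneg_nonneg of_nat_0_le_iff)
  show "0 \<le> pp eps m j" unfolding pp_def Let_def using D by (intro divide_nonneg_pos) auto
  show "pp eps m j \<le> 1" unfolding pp_def Let_def using D wM by (simp add: divide_le_eq_1)
qed

lemma alg: fixes W M E :: real assumes D: "W*E + M - W > 0" and M: "M - 1 > 0"
  shows "(W-1)/(M-1) * (W*E/(W*E+M-W)) + W/(M-1) * (1 - W*E/(W*E+M-W)) = (W*E*(W-1) + (M-W)*W)/((M-1)*(W*E+M-W))"
proof -
  have D': "W*E+M-W \<noteq> 0" and M': "M - 1 \<noteq> 0" using D M by auto
  show ?thesis using D' M' by (simp add: divide_simps)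
qed

lemma pq_alg:
  assumes w: "omega eps m j < m j" and m: "m j \<ge> 2"
  shows "real (omega eps m j - 1) / real (m j - 1) * pp eps m j
         + real (omega eps m j) / real (m j - 1) * (1 - pp eps m j) = qq eps m j"
proof (cases "omega eps m j = 0")
  case True
  then show ?thesis unfolding pp_def qq_def Let_def by simp
next
  case False
  let ?w = "real (omega eps m j)" and ?M = "real (m j)" and ?E = "exp eps"
  have wM: "?w < ?M" using w by simp
  have D: "?w * ?E + ?M - ?w > 0" using wM by (smt (verit) exp_gt_zero mult_nonneg_nonneg of_nat_0_le_iff)
  have M1: "?M - 1 > 0" using m by simp
  have e1: "real (omega eps m j - 1) = ?w - 1" using False by (simp add: of_nat_diff)
  have e2: "real (m j - 1) = ?M - 1" using m by (simp add: of_nat_diff)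
  show ?thesis unfolding pp_def qq_def Let_def e1 e2 by (rule alg[OF D M1])
qed

lemma Zd_prob:
  assumes eps: "eps > 0" and m: "m j \<ge> 2" and a: "a < m j"
  shows "measure_pmf.prob (Zd eps m j x) {Z. a \<in> Z} = (if x mod m j = a then pp eps m j else qq eps m j)"
proof -
  define r where "r = x mod m j"
  define w where "w = omega eps m j"
  define B where "B = {0..<m j} - {r}"
  have r: "r < m j" unfolding r_def using m by simp
  have fB: "finite B" unfolding B_def by simp
  have cB: "card B = m j - 1" unfolding B_def using r by simp
  have wl: "w < m j" unfolding w_def using omega_less[of eps m j, OF eps m] .
  have k1: "w - 1 \<le> card B" "w \<le> card B" using wl cB by auto
  note pb = pp_bounds[OF wl[unfolded w_def]]
  define S1 where "S1 = {S. S \<subseteq> B \<and> card S = w - 1}"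
  define S0 where "S0 = {S. S \<subseteq> B \<and> card S = w}"
  have Zd: "Zd eps m j x = bind_pmf (bernoulli_pmf (pp eps m j)) (\<lambda>b. if b then map_pmf (insert r) (pmf_of_set S1) else pmf_of_set S0)"
    unfolding Zd_def S1_def S0_def B_def r_def w_def ..
  have P: "measure_pmf.prob (Zd eps m j x) {Z. a \<in> Z} =
     measure_pmf.prob (pmf_of_set S1) {S. a = r \<or> a \<in> S} * pp eps m j + measure_pmf.prob (pmf_of_set S0) {S. a \<in> S} * (1 - pp eps m j)"
    unfolding Zd measure_bind_pmf' using pb by (simp add: vimage_def)
  note n1 = subsets_nonempty[OF fB k1(1), folded S1_def]
  note n0 = subsets_nonempty[OF fB k1(2), folded S0_def]
  show ?thesis
  proof (cases "x mod m j = a")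
    case True
    then have ar: "a = r" unfolding r_def by simp
    have "measure_pmf.prob (pmf_of_set S1) {S. a = r \<or> a \<in> S} = 1" using ar by simp
    moreover have "measure_pmf.prob (pmf_of_set S0) {S. a \<in> S} = 0"
      unfolding measure_pmf_zero_iff using n0 ar by (auto simp: S0_def B_def)
    ultimately show ?thesis using P True by simp
  next
    case False
    then have ar: "a \<noteq> r" unfolding r_def by simp
    have aB: "a \<in> B" unfolding B_def using ar a by simp
    have "measure_pmf.prob (pmf_of_set S1) {S. a = r \<or> a \<in> S} = real (w - 1) / real (card B)"
      using prob_subset_mem[OF fB aB k1(1)] ar by (simp add: S1_def)
    moreover have "measure_pmf.prob (pmf_of_set S0) {S. a \<in> S} = real w / real (card B)"
      using prob_subset_mem[OF fB aB k1(2)] by (simp add: S0_def)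
    ultimately show ?thesis using P False pq_alg[OF wl[unfolded w_def] m] unfolding cB w_def
      by (simp add: mult.commute)
  qed
qed

lemma mech_prob:
  assumes eps: "eps > 0" and j: "j < l" and m: "m j \<ge> 2" and a: "a < m j"
  shows "measure_pmf.prob (mech eps m l x) {r. fst r = j \<and> a \<in> snd r}
     = (if x mod m j = a then pp eps m j else qq eps m j) / real l"
proof -
  have ne: "{0..<l} \<noteq> {}" using j by auto
  have "measure_pmf.prob (mech eps m l x) {r. fst r = j \<and> a \<in> snd r}
      = (\<Sum>J\<in>{0..<l}. measure_pmf.prob (Zd eps m J x) (Pair J -` {r. fst r = j \<and> a \<in> snd r})) / real l"
    unfolding mech_alt measure_bind_pmf' using ne by (simp add: integral_pmf_of_set)
  also have "(\<Sum>J\<in>{0..<l}. measure_pmf.prob (Zd eps m J x) (Pair J -` {r. fst r = j \<and> a \<in> snd r}))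
      = (\<Sum>J\<in>{0..<l}. if J = j then measure_pmf.prob (Zd eps m j x) {Z. a \<in> Z} else 0)"
    by (intro sum.cong refl) (auto simp: vimage_def)
  also have "\<dots> = measure_pmf.prob (Zd eps m j x) {Z. a \<in> Z}"
    using j by (simp add: sum.delta)
  finally show ?thesis using Zd_prob[of eps m j a x, OF eps m a] by simp
qed



definition JV :: "nat \<Rightarrow> nat \<Rightarrow> (nat \<Rightarrow> nat) pmf" where
  "JV n l = Pi_pmf {0..<n} 0 (\<lambda>_. pmf_of_set {0..<l})"

definition EvJ :: "nat \<Rightarrow> nat \<Rightarrow> (nat \<Rightarrow> nat) \<Rightarrow> (nat \<Rightarrow> nat) set" where
  "EvJ n l N = {g. \<forall>j<l. card {i. i < n \<and> g i = j} = N j}"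

definition Ev :: "nat \<Rightarrow> nat \<Rightarrow> (nat \<Rightarrow> nat) \<Rightarrow> (nat \<Rightarrow> report) set" where
  "Ev n l N = {\<rho>. \<forall>j<l. blockcount n \<rho> j = N j}"

lemma Ev_vimage: "Ev n l N = (\<lambda>\<rho>. fst \<circ> \<rho>) -` EvJ n l N"
  unfolding Ev_def EvJ_def blockcount_def by auto

lemma reports_fst: "map_pmf (\<lambda>\<rho>. fst \<circ> \<rho>) (reports eps m l n x) = JV n l"
proof -
  have "map_pmf (\<lambda>\<rho>. fst \<circ> \<rho>) (reports eps m l n x) = Pi_pmf {0..<n} 0 (\<lambda>i. map_pmf fst (mech eps m l (x i)))"
    unfolding reports_def by (subst Pi_pmf_map[of "{0..<n}" fst "(0, {})" 0]) auto
  then show ?thesis unfolding JV_def mech_fst .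
qed

lemma measure_pair_Times:
  "measure_pmf.prob (pair_pmf M N) (A \<times> B) = measure_pmf.prob M A * measure_pmf.prob N B"
proof -
  have "measure_pmf.prob (pair_pmf M N) (A \<times> B) = measure_pmf.prob (pair_pmf M N) ((A \<times> B) \<inter> set_pmf (pair_pmf M N))"
    by (rule measure_Int_set_pmf[symmetric])
  also have "(A \<times> B) \<inter> set_pmf (pair_pmf M N) = (A \<inter> set_pmf M) \<times> (B \<inter> set_pmf N)" by auto
  also have "measure_pmf.prob (pair_pmf M N) \<dots> = measure_pmf.prob M (A \<inter> set_pmf M) * measure_pmf.prob N (B \<inter> set_pmf N)"
    by (intro measure_pmf_prob_product) auto
  finally show ?thesis by (simp add: measure_Int_set_pmf)
qed

lemma expectation_card:
  assumes "finite I"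
  shows "measure_pmf.expectation M (\<lambda>\<omega>. real (card {i\<in>I. \<omega> \<in> A i})) = (\<Sum>i\<in>I. measure_pmf.prob M (A i))"
proof -
  have "(\<lambda>\<omega>. real (card {i\<in>I. \<omega> \<in> A i})) = (\<lambda>\<omega>. \<Sum>i\<in>I. indicator (A i) \<omega>)"
  proof
    fix \<omega>
    have "real (card {i\<in>I. \<omega> \<in> A i}) = (\<Sum>i\<in>I. if \<omega> \<in> A i then 1 else 0)"
      by (subst sum.inter_filter[OF assms, symmetric]) simp
    then show "real (card {i\<in>I. \<omega> \<in> A i}) = (\<Sum>i\<in>I. indicator (A i) \<omega>)" by (simp add: indicator_def of_bool_def)
  qed
  then have "measure_pmf.expectation M (\<lambda>\<omega>. real (card {i\<in>I. \<omega> \<in> A i}))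
     = (\<Sum>i\<in>I. measure_pmf.expectation M (indicator (A i)))"
    by (simp only:) (intro Bochner_Integration.integral_sum integrable_real_indicator,
         auto simp: measure_pmf.emeasure_finite less_top[symmetric])
  then show ?thesis by simp
qed

lemma measure_cond_pmf:
  assumes "set_pmf p \<inter> s \<noteq> {}"
  shows "measure_pmf.prob (cond_pmf p s) A = measure_pmf.prob p (s \<inter> A) / measure_pmf.prob p s"
  unfolding cond_pmf.rep_eq[OF assms]
  by (rule measure_uniform_measure) (use assms in \<open>auto simp: measure_pmf.emeasure_eq_measure measure_pmf_zero_iff\<close>)

lemma JV_exchange:
  assumes i: "i < n" and i': "i' < n"
  shows "measure_pmf.prob (JV n l) {g. g i = j \<and> g \<in> EvJ n l N} = measure_pmf.prob (JV n l) {g. g i' = j \<and> g \<in> EvJ n l N}"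
proof -
  define h where "h t = (if t = i then i' else if t = i' then i else t)" for t
  have hh: "h (h t) = t" for t unfolding h_def by auto
  have hn: "t < n \<Longrightarrow> h t < n" for t unfolding h_def using i i' by auto
  have bij: "bij_betw h {0..<n} {0..<n}"
    by (rule bij_betwI[where g=h]) (auto simp: hh hn)
  have out: "x \<notin> {0..<n} \<Longrightarrow> h x \<notin> {0..<n}" for x unfolding h_def using i i' by auto
  have JV: "JV n l = map_pmf (\<lambda>g. g \<circ> h) (JV n l)"
    unfolding JV_def by (rule Pi_pmf_bij_betw[OF _ bij out]) simp
  have card_eq: "card {t. t < n \<and> g (h t) = j'} = card {t. t < n \<and> g t = j'}" for g :: "nat \<Rightarrow> nat" and j'
  proof -
    have "bij_betw h {t. t < n \<and> g (h t) = j'} {t. t < n \<and> g t = j'}"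
      by (rule bij_betwI[where g=h]) (auto simp: hh hn)
    then show ?thesis by (rule bij_betw_same_card)
  qed
  have "(\<lambda>g. g \<circ> h) -` {g. g i = j \<and> g \<in> EvJ n l N} = {g. g i' = j \<and> g \<in> EvJ n l N}"
    unfolding EvJ_def using card_eq by (auto simp: h_def)
  then show ?thesis by (subst JV) simp
qed

lemma JV_sum:
  assumes that: "j < l"
  shows "(\<Sum>i<n. measure_pmf.prob (JV n l) {g. g i = j \<and> g \<in> EvJ n l N}) = real (N j) * measure_pmf.prob (JV n l) (EvJ n l N)"
proof -
  have "(\<Sum>i<n. measure_pmf.prob (JV n l) {g. g i = j \<and> g \<in> EvJ n l N})
     = measure_pmf.expectation (JV n l) (\<lambda>g. real (card {i\<in>{..<n}. g \<in> {g. g i = j \<and> g \<in> EvJ n l N}}))"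
    by (rule expectation_card[symmetric]) simp
  also have "(\<lambda>g. real (card {i\<in>{..<n}. g \<in> {g. g i = j \<and> g \<in> EvJ n l N}})) = (\<lambda>g. real (N j) * indicator (EvJ n l N) g)"
  proof
    fix g
    show "real (card {i\<in>{..<n}. g \<in> {g. g i = j \<and> g \<in> EvJ n l N}}) = real (N j) * indicator (EvJ n l N) g"
    proof (cases "g \<in> EvJ n l N")
      case True
      then have "card {i. i < n \<and> g i = j} = N j" using that unfolding EvJ_def by auto
      moreover have "{i\<in>{..<n}. g \<in> {g. g i = j \<and> g \<in> EvJ n l N}} = {i. i < n \<and> g i = j}" using True by auto
      ultimately show ?thesis using True by simp
    next
      case False
      then show ?thesis by simp
    qed
  qed
  also have "measure_pmf.expectation (JV n l) (\<lambda>g. real (N j) * indicator (EvJ n l N) g) = real (N j) * measure_pmf.prob (JV n l) (EvJ n l N)"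
    by simp
  finally show ?thesis .
qed

lemma exists_assign:
  fixes l :: nat and N :: "nat \<Rightarrow> nat"
  shows "\<exists>g::nat\<Rightarrow>nat. (\<forall>i<(\<Sum>j<l. N j). g i < l) \<and> (\<forall>j<l. card {i. i < (\<Sum>j<l. N j) \<and> g i = j} = N j)"
proof (induction l)
  case 0
  then show ?case by simp
next
  case (Suc l)
  then obtain g where g1: "\<forall>i<(\<Sum>j<l. N j). g i < l" and g2: "\<forall>j<l. card {i. i < (\<Sum>j<l. N j) \<and> g i = j} = N j"
    by blast
  define s where "s = (\<Sum>j<l. N j)"
  define g' where "g' i = (if i < s then g i else l)" for i
  have S: "(\<Sum>j<Suc l. N j) = s + N l" unfolding s_def by simp
  have "\<forall>i<s + N l. g' i < Suc l" unfolding g'_def using g1 s_def by auto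
  moreover have "\<forall>j<Suc l. card {i. i < s + N l \<and> g' i = j} = N j"
  proof (intro allI impI)
    fix j assume j: "j < Suc l"
    show "card {i. i < s + N l \<and> g' i = j} = N j"
    proof (cases "j = l")
      case True
      have g1': "\<forall>i<s. g i < l" using g1 unfolding s_def .
      have gl: "g' i = l \<longleftrightarrow> s \<le> i" for i
        using g1' unfolding g'_def by (cases "i < s") auto
      have "{i. i < s + N l \<and> g' i = l} = {s..<s + N l}"
      proof (rule Set.set_eqI)
        fix i show "i \<in> {i. i < s + N l \<and> g' i = l} \<longleftrightarrow> i \<in> {s..<s + N l}"
          using gl[of i] by (simp add: conj_commute)
      qed
      then show ?thesis using True by simp
    next
      case False
      then have "j < l" using j by simp
      have "{i. i < s + N l \<and> g' i = j} = {i. i < s \<and> g i = j}"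
        unfolding g'_def using False by auto
      then show ?thesis using g2 \<open>j < l\<close> s_def by simp
    qed
  qed
  ultimately show ?case unfolding S by blast
qed

lemma EvJ_pos:
  assumes l: "l \<ge> 1" and N: "(\<Sum>j<l. N j) = n"
  shows "measure_pmf.prob (JV n l) (EvJ n l N) > 0"
proof -
  obtain g where g1: "\<forall>i<n. g i < l" and g2: "\<forall>j<l. card {i. i < n \<and> g i = j} = N j"
    using exists_assign[where l=l and N=N] N by auto
  define g' where "g' i = (if i < n then g i else 0)" for i
  have "{i. i < n \<and> g' i = j} = {i. i < n \<and> g i = j}" for j unfolding g'_def by auto
  then have "g' \<in> EvJ n l N" unfolding EvJ_def using g2 by simp
  moreover have "g' \<in> set_pmf (JV n l)"
    unfolding JV_def using l g1 by (subst set_Pi_pmf) (auto simp: PiE_dflt_def g'_def)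
  ultimately show ?thesis by (rule measure_pmf_posI[rotated])
qed

lemma blockcount_upd:
  assumes "fst y = fst c"
  shows "blockcount n (f(i := y)) = blockcount n (f(i := c))"
proof -
  have "\<forall>t. fst ((f(i := y)) t) = fst ((f(i := c)) t)" using assms by simp
  then show ?thesis unfolding blockcount_def by simp
qed

lemma reports_factor:
  assumes i: "i < n" and Y: "\<And>y. y \<in> Y \<Longrightarrow> fst y = fst c"
  shows "measure_pmf.prob (reports eps m l n x) {\<rho>. \<rho> i \<in> Y \<and> \<rho> \<in> Ev n l N}
    = measure_pmf.prob (mech eps m l (x i)) Y *
      measure_pmf.prob (Pi_pmf ({0..<n} - {i}) (0, {}) (\<lambda>i. mech eps m l (x i))) {f. f(i := c) \<in> Ev n l N}"
proof -
  let ?R' = "Pi_pmf ({0..<n} - {i}) (0, {}) (\<lambda>i. mech eps m l (x i))"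
  have A: "{0..<n} = insert i ({0..<n} - {i})" using i by auto
  have R: "reports eps m l n x = map_pmf (\<lambda>(y, f). f(i := y)) (pair_pmf (mech eps m l (x i)) ?R')"
    unfolding reports_def by (subst A, rule Pi_pmf_insert) auto
  have "(\<lambda>(y, f). f(i := y)) -` {\<rho>. \<rho> i \<in> Y \<and> \<rho> \<in> Ev n l N} = Y \<times> {f. f(i := c) \<in> Ev n l N}"
  proof (rule Set.set_eqI)
    fix z :: "report \<times> (nat \<Rightarrow> report)"
    obtain y f where z: "z = (y, f)" by (cases z)
    show "z \<in> (\<lambda>(y, f). f(i := y)) -` {\<rho>. \<rho> i \<in> Y \<and> \<rho> \<in> Ev n l N} \<longleftrightarrow> z \<in> Y \<times> {f. f(i := c) \<in> Ev n l N}"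
    proof (cases "y \<in> Y")
      case True
      then have "blockcount n (f(i := y)) = blockcount n (f(i := c))" using Y by (intro blockcount_upd) auto
      then show ?thesis using True unfolding z Ev_def by simp
    qed (simp add: z)
  qed
  then show ?thesis unfolding R by (simp add: measure_pair_Times)
qed

lemma U_prob: "j < l \<Longrightarrow> measure_pmf.prob (mech eps m l x) {r. fst r = j} = 1 / real l"
proof -
  assume j: "j < l"
  have "measure_pmf.prob (mech eps m l x) {r. fst r = j} = measure_pmf.prob (map_pmf fst (mech eps m l x)) {j}"
    by (simp add: vimage_def)
  also have "\<dots> = 1 / real l" unfolding mech_fst using j by (subst measure_pmf_of_set) auto
  finally show ?thesis .
qed

lemma joint_prob:
  assumes eps: "eps > 0" and i: "i < n" and j: "j < l" and m: "m j \<ge> 2" and a: "a < m j"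
  shows "measure_pmf.prob (reports eps m l n x) {\<rho>. \<rho> i \<in> {r. fst r = j \<and> a \<in> snd r} \<and> \<rho> \<in> Ev n l N}
    = (if x i mod m j = a then pp eps m j else qq eps m j) * measure_pmf.prob (JV n l) {g. g i = j \<and> g \<in> EvJ n l N}"
proof -
  let ?X = "measure_pmf.prob (Pi_pmf ({0..<n} - {i}) (0, {}) (\<lambda>i. mech eps m l (x i))) {f. f(i := (j, {})) \<in> Ev n l N}"
  have l: "real l > 0" using j by simp
  have 1: "measure_pmf.prob (reports eps m l n x) {\<rho>. \<rho> i \<in> {r. fst r = j \<and> a \<in> snd r} \<and> \<rho> \<in> Ev n l N}
     = (if x i mod m j = a then pp eps m j else qq eps m j) / real l * ?X"
    using reports_factor[OF i, of "{r. fst r = j \<and> a \<in> snd r}" "(j, {})"] mech_prob[where eps=eps and j=j and l=l and m=m and a=a and x="x i", OF eps j m a] by simp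
  have 2: "measure_pmf.prob (reports eps m l n x) {\<rho>. \<rho> i \<in> {r. fst r = j} \<and> \<rho> \<in> Ev n l N} = 1 / real l * ?X"
    using reports_factor[OF i, of "{r. fst r = j}" "(j, {})"] U_prob[OF j] by simp
  have "{\<rho>. \<rho> i \<in> {r. fst r = j} \<and> \<rho> \<in> Ev n l N} = (\<lambda>\<rho>. fst \<circ> \<rho>) -` {g. g i = j \<and> g \<in> EvJ n l N}"
    unfolding Ev_vimage by auto
  then have 3: "measure_pmf.prob (reports eps m l n x) {\<rho>. \<rho> i \<in> {r. fst r = j} \<and> \<rho> \<in> Ev n l N}
     = measure_pmf.prob (JV n l) {g. g i = j \<and> g \<in> EvJ n l N}"
    by (simp only: reports_fst[of eps m l n x, symmetric] measure_map_pmf)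
  have 4: "?X / real l = measure_pmf.prob (JV n l) {g. g i = j \<and> g \<in> EvJ n l N}" using 2 3 by simp
  have "measure_pmf.prob (reports eps m l n x) {\<rho>. \<rho> i \<in> {r. fst r = j \<and> a \<in> snd r} \<and> \<rho> \<in> Ev n l N}
     = (if x i mod m j = a then pp eps m j else qq eps m j) * (?X / real l)"
    using 1 by simp
  then show ?thesis unfolding 4 .
qed

lemma Ev_prob: "measure_pmf.prob (reports eps m l n x) (Ev n l N) = measure_pmf.prob (JV n l) (EvJ n l N)"
  unfolding Ev_vimage by (simp only: reports_fst[of eps m l n x, symmetric] measure_map_pmf)

lemma cnt_expect:
  assumes eps: "eps > 0" and l: "l \<ge> 1" and N: "(\<Sum>j<l. N j) = n" and j: "j < l" and m: "m j \<ge> 2" and a: "a < m j"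
  shows "measure_pmf.expectation (cond_pmf (reports eps m l n x) (Ev n l N)) (\<lambda>\<rho>. real (cnt n \<rho> j a))
    = real (N j) / real n * (\<Sum>i<n. if x i mod m j = a then pp eps m j else qq eps m j)"
proof -
  let ?R = "reports eps m l n x"
  let ?E = "Ev n l N"
  let ?P = "measure_pmf.prob (JV n l) (EvJ n l N)"
  let ?h = "\<lambda>i. if x i mod m j = a then pp eps m j else qq eps m j"
  let ?\<beta> = "\<lambda>i. measure_pmf.prob (JV n l) {g. g i = j \<and> g \<in> EvJ n l N}"
  define A :: "nat \<Rightarrow> (nat \<Rightarrow> report) set" where "A i = {\<rho>. \<rho> i \<in> {r. fst r = j \<and> a \<in> snd r}}" for i
  have P: "?P > 0" using EvJ_pos[OF l N] .
  have PE: "measure_pmf.prob ?R ?E = ?P" by (rule Ev_prob)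
  have ne: "set_pmf ?R \<inter> ?E \<noteq> {}" using P PE measure_pmf_zero_iff[of ?R ?E] by auto
  have cnt: "real (cnt n \<rho> j a) = real (card {i\<in>{..<n}. \<rho> \<in> A i})" for \<rho>
    unfolding cnt_def A_def by (simp add: conj_assoc)
  have "measure_pmf.expectation (cond_pmf ?R ?E) (\<lambda>\<rho>. real (cnt n \<rho> j a))
      = (\<Sum>i<n. measure_pmf.prob (cond_pmf ?R ?E) (A i))"
    unfolding cnt by (rule expectation_card) simp
  also have "\<dots> = (\<Sum>i<n. ?h i * ?\<beta> i / ?P)"
  proof (intro sum.cong refl)
    fix i assume i: "i \<in> {..<n}"
    have "?E \<inter> A i = {\<rho>. \<rho> i \<in> {r. fst r = j \<and> a \<in> snd r} \<and> \<rho> \<in> ?E}" unfolding A_def by auto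
    then show "measure_pmf.prob (cond_pmf ?R ?E) (A i) = ?h i * ?\<beta> i / ?P"
      using measure_cond_pmf[OF ne, of "A i"] joint_prob[where eps=eps and i=i and n=n and j=j and l=l and m=m and a=a and x=x and N=N, OF eps _ j m a] i PE by simp
  qed
  also have "\<dots> = real (N j) / real n * (\<Sum>i<n. ?h i)"
  proof (cases "n = 0")
    case True
    then show ?thesis by simp
  next
    case False
    have b: "?\<beta> i = ?\<beta> 0" if "i \<in> {..<n}" for i using JV_exchange[of i n 0] that False by simp
    have "(\<Sum>i<n. ?\<beta> i) = (\<Sum>i<n. ?\<beta> 0)"
      by (rule sum.cong[OF refl], rule b)
    then have "real n * ?\<beta> 0 = real (N j) * ?P"
      using JV_sum[OF j, of n N] by simp
    then have b0: "?\<beta> 0 / ?P = real (N j) / real n" using P False by (simp add: field_simps)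
    have "(\<Sum>i<n. ?h i * ?\<beta> i / ?P) = (\<Sum>i<n. ?h i * (?\<beta> 0 / ?P))"
    proof (rule sum.cong[OF refl])
      fix i assume i: "i \<in> {..<n}"
      show "?h i * ?\<beta> i / ?P = ?h i * (?\<beta> 0 / ?P)" by (simp only: b[OF i]) simp
    qed
    also have "\<dots> = real (N j) / real n * (\<Sum>i<n. ?h i)"
      unfolding b0 by (simp add: sum_distrib_left mult.commute)
    finally show ?thesis .
  qed
  finally show ?thesis .
qed



lemma offset_Suc: "offset m (Suc j) = offset m j + m j"
  unfolding offset_def by simp

lemma blk_pos:
  assumes t: "t < TT m l"
  shows "blk m t < l" "offset m (blk m t) \<le> t" "pos m t < m (blk m t)"
proof -
  have l: "l > 0" using t unfolding TT_def offset_def by (cases l) auto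
  have ex: "t < offset m (Suc (l - 1))" using t l unfolding TT_def by simp
  have le: "blk m t \<le> l - 1" unfolding blk_def by (rule Least_le) (rule ex)
  then show "blk m t < l" using l by simp
  have lt: "t < offset m (Suc (blk m t))" unfolding blk_def by (rule LeastI) (rule ex)
  show off: "offset m (blk m t) \<le> t"
  proof (cases "blk m t")
    case 0
    then show ?thesis by (simp add: offset_def)
  next
    case (Suc b)
    have "\<not> t < offset m (Suc b)"
    proof
      assume "t < offset m (Suc b)"
      then have "blk m t \<le> b" unfolding blk_def by (rule Least_le)
      then show False using Suc by simp
    qed
    then show ?thesis using Suc by simp
  qed
  show "pos m t < m (blk m t)" unfolding pos_def using lt off offset_Suc[of m "blk m t"] by simp
qed

lemma card_bound: "card {i. i < n \<and> P i} \<le> n"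
proof -
  have "card {i. i < n \<and> P i} \<le> card {..<n}" by (rule card_mono) auto
  then show ?thesis by simp
qed

lemma integrable_cnt: "integrable (measure_pmf M) (\<lambda>\<rho>. real (cnt n \<rho> j a))"
  by (rule measure_pmf.integrable_const_bound[where B="real n"]) (auto simp: cnt_def card_bound)

lemma card_sum_bool:
  fixes n :: nat
  shows "real (card {i. i < n \<and> P i}) = (\<Sum>i<n. if P i then 1 else 0)"
proof -
  have "{i. i < n \<and> P i} = {i\<in>{..<n}. P i}" by auto
  then show ?thesis by (simp only:) (subst sum.inter_filter[symmetric], auto)
qed

lemma sum_if_card:
  fixes p q :: real and n :: nat
  shows "(\<Sum>i<n. if P i then p else q) = real n * q + (p - q) * real (card {i. i < n \<and> P i})"
proof -
  have "(\<Sum>i<n. if P i then p else q) = (\<Sum>i<n. q + (p - q) * (if P i then 1 else 0))"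
    by (intro sum.cong refl) auto
  also have "\<dots> = real n * q + (p - q) * (\<Sum>i<n. if P i then 1 else 0)"
    by (simp add: sum.distrib sum_distrib_left)
  finally show ?thesis by (simp add: card_sum_bool)
qed

lemma card_mod:
  fixes n k M a :: nat and x :: "nat \<Rightarrow> nat"
  assumes x: "\<And>i. i < n \<Longrightarrow> x i < k"
  shows "(\<Sum>y<k. if y mod M = a then real (card {i. i < n \<and> x i = y}) else 0)
       = real (card {i. i < n \<and> x i mod M = a})"
proof -
  have "(\<Sum>y<k. if y mod M = a then real (card {i. i < n \<and> x i = y}) else 0)
      = (\<Sum>y<k. \<Sum>i<n. if x i = y \<and> y mod M = a then 1 else 0)"
    by (intro sum.cong refl) (auto simp: card_sum_bool)
  also have "\<dots> = (\<Sum>i<n. \<Sum>y<k. if x i = y then (if y mod M = a then 1 else 0) else 0)"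
    by (subst sum.swap) (intro sum.cong refl, auto)
  also have "\<dots> = (\<Sum>i<n. if x i mod M = a then 1 else 0)"
    using x by (intro sum.cong refl) (simp add: sum.delta')
  finally show ?thesis by (simp add: card_sum_bool)
qed

lemma affine_int:
  assumes "integrable (measure_pmf M) (X :: _ \<Rightarrow> real)"
  shows "integrable (measure_pmf M) (\<lambda>\<rho>. a * (b * ((X \<rho> / c - d) / e)))"
  using assms by (intro integrable_mult_right integrable_divide_zero Bochner_Integration.integrable_diff) auto

lemma affine_exp:
  assumes "integrable (measure_pmf M) (X :: _ \<Rightarrow> real)"
  shows "measure_pmf.expectation M (\<lambda>\<rho>. a * (b * ((X \<rho> / c - d) / e)))
    = a * (b * ((measure_pmf.expectation M X / c - d) / e))"
  using assms by (simp add: Bochner_Integration.integral_diff)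

theorem theorem2:
  fixes eps :: real and m :: "nat \<Rightarrow> nat" and l k n :: nat
    and x :: "nat \<Rightarrow> nat" and f :: "nat \<Rightarrow> real" and N :: "nat \<Rightarrow> nat"
  assumes eps: "eps > 0"
    and l: "l \<ge> 1"
    and m2: "\<And>j. j < l \<Longrightarrow> m j \<ge> 2"
    and coprime: "\<And>i j. i < l \<Longrightarrow> j < l \<Longrightarrow> i \<noteq> j \<Longrightarrow> coprime (m i) (m j)"
    and x: "\<And>i. i < n \<Longrightarrow> x i < k"
    and f: "\<And>v. f v = real (card {i. i < n \<and> x i = v}) / real n"
    and N_pos: "\<And>j. j < l \<Longrightarrow> N j \<ge> 1"
    and N_sum: "(\<Sum>j<l. N j) = n"
    and full_rank: "vec_space.rank (TT m l) (Aw eps m l k N) = k"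
  shows "\<forall>v < k. measure_pmf.expectation
            (cond_pmf (reports eps m l n x) {\<rho>. \<forall>j<l. blockcount n \<rho> j = N j})
            (\<lambda>\<rho>. fhat eps m l k n \<rho> $ v) = f v"
proof (intro allI impI)
  fix v assume v: "v < k"
  define T where "T = TT m l"
  define R where "R = reports eps m l n x"
  define E where "E = {\<rho>. \<forall>j<l. blockcount n \<rho> j = N j}"
  have E_Ev: "E = Ev n l N" unfolding E_def Ev_def ..
  define C where "C = cond_pmf R E"
  define AwN where "AwN = Aw eps m l k N"
  have AwC: "AwN \<in> carrier_mat T k" unfolding AwN_def Aw_def T_def by simp
  obtain Bi where Bi1: "mat_inverse (transpose_mat AwN * AwN) = Some Bi"
    and Bi2: "Bi * (transpose_mat AwN * AwN) = 1\<^sub>m k" and Bi3: "Bi \<in> carrier_mat k k"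
    using gram_inverse[OF AwC] full_rank unfolding AwN_def T_def by blast
  have ne: "set_pmf R \<inter> E \<noteq> {}"
    using EvJ_pos[OF l N_sum] Ev_prob[of eps m l n x N] measure_pmf_zero_iff[of R E]
    unfolding R_def E_Ev by auto
  have n1: "n \<ge> 1"
  proof -
    have "N 0 \<le> (\<Sum>j<l. N j)" using l by (intro member_le_sum) auto
    then show ?thesis using N_pos[of 0] l N_sum by simp
  qed
  define w where "w t = sqrt (wt eps m N (blk m t))" for t
  define p where "p t = pp eps m (blk m t)" for t
  define q where "q t = qq eps m (blk m t)" for t
  define cn where "cn \<rho> t = real (cnt n \<rho> (blk m t) (pos m t))" for \<rho> t
  define MM where "MM = Bi * transpose_mat AwN"
  have MMC: "MM \<in> carrier_mat k T" unfolding MM_def using Bi3 AwC by simp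
  define lin where "lin \<rho> = (\<Sum>t<T. MM $$ (v, t) * (w t * ((cn \<rho> t / real (N (blk m t)) - q t) / (p t - q t))))" for \<rho>
  have key1: "fhat eps m l k n \<rho> $ v = lin \<rho>" if \<rho>: "\<rho> \<in> set_pmf C" for \<rho>
  proof -
    have "\<rho> \<in> E" using \<rho> ne unfolding C_def by simp
    then have bc: "\<And>j. j < l \<Longrightarrow> blockcount n \<rho> j = N j" unfolding E_def by simp
    have wtb: "wt eps m (blockcount n \<rho>) (blk m t) = wt eps m N (blk m t)" if "t < T" for t
      using bc[OF blk_pos(1)[OF that[unfolded T_def]]] unfolding wt_def by simp
    have A: "Aw eps m l k (blockcount n \<rho>) = AwN"
      unfolding AwN_def by (rule eq_matI) (auto simp: Aw_def wtb T_def)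
    define st where "st = vec T (\<lambda>t. w t * ((cn \<rho> t / real (N (blk m t)) - q t) / (p t - q t)))"
    have S: "stilde eps m l n \<rho> = st"
      unfolding st_def by (rule eq_vecI)
        (auto simp: stilde_def T_def wtb w_def shat_def cn_def p_def q_def bc blk_pos(1))
    have stC: "st \<in> carrier_vec T" unfolding st_def by simp
    have "fhat eps m l k n \<rho> = Bi *\<^sub>v (transpose_mat AwN *\<^sub>v st)"
      unfolding fhat_def Let_def A S Bi1 by simp
    also have "\<dots> = MM *\<^sub>v st" unfolding MM_def
      using assoc_mult_mat_vec[of Bi k k "transpose_mat AwN" T st] Bi3 AwC stC by simp
    finally have "fhat eps m l k n \<rho> $ v = (MM *\<^sub>v st) $ v" by simp
    also have "\<dots> = (\<Sum>t<T. MM $$ (v, t) * st $ t)"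
      using MMC v stC by (simp add: scalar_prod_def atLeast0LessThan)
    also have "\<dots> = lin \<rho>" unfolding lin_def st_def by (intro sum.cong refl) simp
    finally show ?thesis .
  qed
  show "measure_pmf.expectation
            (cond_pmf (reports eps m l n x) {\<rho>. \<forall>j<l. blockcount n \<rho> j = N j})
            (\<lambda>\<rho>. fhat eps m l k n \<rho> $ v) = f v"
  proof -
    have CC: "cond_pmf (reports eps m l n x) {\<rho>. \<forall>j<l. blockcount n \<rho> j = N j} = C"
      unfolding C_def R_def E_def ..
    have intc: "integrable (measure_pmf C) (\<lambda>\<rho>. cn \<rho> t)" for t
      unfolding cn_def by (rule integrable_cnt)
    have "measure_pmf.expectation C (\<lambda>\<rho>. fhat eps m l k n \<rho> $ v) = measure_pmf.expectation C lin"
      by (intro integral_cong_AE) (auto intro!: AE_pmfI key1)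
    also have "\<dots> = (\<Sum>t<T. measure_pmf.expectation C (\<lambda>\<rho>. MM $$ (v, t) * (w t * ((cn \<rho> t / real (N (blk m t)) - q t) / (p t - q t)))))"
      unfolding lin_def by (rule Bochner_Integration.integral_sum) (rule affine_int[OF intc])
    also have "\<dots> = (\<Sum>t<T. MM $$ (v, t) * (w t * ((measure_pmf.expectation C (\<lambda>\<rho>. cn \<rho> t) / real (N (blk m t)) - q t) / (p t - q t))))"
      by (intro sum.cong refl affine_exp[OF intc])
    also have "\<dots> = (\<Sum>t<T. MM $$ (v, t) * (AwN *\<^sub>v vec k f) $ t)"
    proof (intro sum.cong refl)
      fix t assume "t \<in> {..<T}"
      then have t: "t < TT m l" unfolding T_def by simp
      define j where "j = blk m t"
      define a where "a = pos m t"
      have j: "j < l" unfolding j_def using blk_pos(1)[OF t] .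
      have a: "a < m j" unfolding a_def j_def using blk_pos(3)[OF t] .
      have Nj: "real (N j) > 0" using N_pos[OF j] by simp
      define c where "c = real (card {i. i < n \<and> x i mod m j = a})"
      have ex: "measure_pmf.expectation C (\<lambda>\<rho>. cn \<rho> t) = real (N j) / real n * (real n * q t + (p t - q t) * c)"
        unfolding C_def R_def E_Ev cn_def
        using cnt_expect[where eps=eps and l=l and N=N and n=n and j=j and m=m and a=a and x=x, OF eps l N_sum j m2[OF j] a] unfolding j_def a_def c_def p_def q_def
        by (simp add: sum_if_card)
      have lhs: "w t * ((measure_pmf.expectation C (\<lambda>\<rho>. cn \<rho> t) / real (N (blk m t)) - q t) / (p t - q t)) = w t * (c / real n)"
      proof (cases "p t = q t")
        case True
        then have "w t = 0" unfolding w_def wt_def p_def q_def by simp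
        then show ?thesis by simp
      next
        case False
        have "(measure_pmf.expectation C (\<lambda>\<rho>. cn \<rho> t) / real (N (blk m t)) - q t) / (p t - q t) = c / real n"
          unfolding ex j_def[symmetric] using Nj n1 False by (simp add: field_simps)
        then show ?thesis by simp
      qed
      have rhs: "(AwN *\<^sub>v vec k f) $ t = w t * (c / real n)"
      proof -
        have "(AwN *\<^sub>v vec k f) $ t = (\<Sum>y<k. AwN $$ (t, y) * f y)"
          using AwC t unfolding T_def by (simp add: scalar_prod_def atLeast0LessThan)
        also have "\<dots> = (\<Sum>y<k. w t * ((if y mod m j = a then real (card {i. i < n \<and> x i = y}) else 0) / real n))"
          using t unfolding T_def by (intro sum.cong refl) (auto simp: AwN_def Aw_def Amat_def w_def j_def a_def f)
        also have "\<dots> = w t * ((\<Sum>y<k. if y mod m j = a then real (card {i. i < n \<and> x i = y}) else 0) / real n)"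
          by (simp add: sum_distrib_left sum_divide_distrib)
        also have "\<dots> = w t * (c / real n)" unfolding c_def using card_mod[of n x k "m j" a] x by simp
        finally show ?thesis .
      qed
      show "MM $$ (v, t) * (w t * ((measure_pmf.expectation C (\<lambda>\<rho>. cn \<rho> t) / real (N (blk m t)) - q t) / (p t - q t)))
          = MM $$ (v, t) * (AwN *\<^sub>v vec k f) $ t" unfolding lhs rhs ..
    qed
    also have "\<dots> = (MM *\<^sub>v (AwN *\<^sub>v vec k f)) $ v"
      using MMC AwC v by (simp add: scalar_prod_def atLeast0LessThan)
    also have "MM *\<^sub>v (AwN *\<^sub>v vec k f) = (MM * AwN) *\<^sub>v vec k f"
      using assoc_mult_mat_vec[of MM k T AwN k "vec k f"] MMC AwC by simp
    also have "MM * AwN = 1\<^sub>m k"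
      unfolding MM_def using assoc_mult_mat[of Bi k k "transpose_mat AwN" T AwN k] Bi2 Bi3 AwC by simp
    finally show ?thesis unfolding CC using v by simp
  qed
qed



end
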